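(* Consider the static single-object erasure-coded Byzantine read/write protocol described in the context over a set $C$ of flexnodes, at most $b<\frac{|C|-k}{3}$ of which are Byzantine, and suppose at most $\delta$ write operations are concurrent with any read. In any execution, if $\omega$ is a complete write and $\rho$ a complete read such that $\omega$ completes before $\rho$ is invoked, and $\omega$ executes put-data$(\langle t_\omega,v_\omega\rangle)$ on $C$, then $\rho$ returns a value associated with a tag $t_\rho\ge t_\omega$.
   Context: Model. $C$ is a fixed finite set of processes ("flexnodes") over asynchronous reliable channels. Up to $b$ flexnodes may be Byzantine. Processes invoking reads/writes follow the protocol but may crash. Signatures are unforgeable. An $[n,k]$ RLNC code with $n=|C|$: $\mathrm{Encode}(v)$ produces $|C|$ coded elements, any $k$ of which (from the same encoding) recover $v$. Tags are pairs $(z,w)$, $z\in\mathbb{N}$, $w$ a writer identifier, ordered lexicographically. A parameter $\delta\ge1$ is fixed. A quorum is any subset of $C$ of size $\lceil (2|C|+k)/3\rceil$. State. Each flexnode keeps a set $List$ of signed triples $(\langle t,e\rangle,\sigma)$, initially holding the initial pair with tag $t_0$. Primitives (by flexnode $p$): get-tag: query all, each replies with its signed max-tag entry, wait for replies from a quorum, return the maximum verified tag. put-data$(\langle t,v\rangle)$: encode $v$ into $e_1,\dots,e_{|C|}$, send $\langle t,e_j\rangle$ signed by $p$ to the $j$-th flexnode; a receiver adds it to $List$ if the signature verifies and no entry with tag $t$ exists, then if $|List|>\delta+1$ removes the entries with minimum tag, and acknowledges; $p$ waits for a quorum of acknowledgements. get-data: query all, each replies with its $List$, wait for a quorum, keep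 verified pairs, take the maximum tag appearing in at least $k$ received lists, decode and return it with its tag; if none exists the primitive does not complete. Operations: read = get-data returning $\langle t,v\rangle$, then put-data$(\langle t,v\rangle)$, then return $\langle t,v\rangle$; write$(v)$ by $w$ = get-tag returning $t$, then put-data$(\langle (t.z+1,w),v\rangle)$. *)

theory Defs
  imports Complex_Main "HOL-Library.Multiset" "HOL-Library.Product_Lexorder"
begin

text \<open>Flexnodes are the indices 0..<N (so |C| = N; the j-th flexnode is j).
  Client processes (readers/writers) are identified by natural numbers; the
  writer identifier in a tag is the client id.  Tags are pairs (z,w) ordered
  lexicographically (Product_Lexorder).\<close>

type_synonym tag = "nat \<times> nat"
type_synonym opid = "nat \<times> nat"  \<comment> \<open>(client, sequence number of its operation)\<close>

definition t0 :: tag where "t0 = (0, 0)"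

datatype proc = Node nat | Client nat

datatype 'e msg =
    QTag
  | RTag "tag \<times> 'e"              \<comment> \<open>reply: signed max-tag entry\<close>
  | PutM "tag \<times> 'e"              \<comment> \<open>put-data: signed pair\<close>
  | Ack
  | QData
  | RData "(tag \<times> 'e) set"       \<comment> \<open>reply: the whole List\<close>

text \<open>A packet in transit: (sender, receiver, operation id, message).  Channels
  are authenticated point-to-point: the sender field cannot be forged.\<close>
type_synonym 'e packet = "proc \<times> proc \<times> opid \<times> 'e msg"

datatype opkind = WriteK | ReadK

datatype ('v, 'e) cstatus =
    Idle
  | GetTagPh 'v "(nat \<times> (tag \<times> 'e)) set"   \<comment> \<open>write in get-tag; replies (node, entry)\<close>
  | PutPh opkind "tag \<times> 'v" "nat set"       \<comment> \<open>put-data of the pair; acks received\<close>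
  | GetDataPh "(nat \<times> (tag \<times> 'e) set) set" \<comment> \<open>read in get-data; replies (node, List)\<close>

datatype 'v event =
    InvW opid 'v | RespW opid | InvR opid | RespR opid tag 'v

text \<open>Signatures are modelled abstractly: the ghost set signed contains exactly
  the pairs (tag, coded element) that have been signed by a (correct) invoking
  process; a pair verifies iff it is in this set (unforgeability).  The ghost
  map wtag records the tag t used by a write in its put-data.\<close>
record ('v, 'e) gstate =
  lst    :: "nat \<Rightarrow> (tag \<times> 'e) set"
  net    :: "'e packet multiset"
  signed :: "(tag \<times> 'e) set"
  cst    :: "nat \<Rightarrow> ('v, 'e) cstatus"
  cnt    :: "nat \<Rightarrow> nat"
  hist   :: "'v event list"
  wtag   :: "opid \<Rightarrow> tag option"

definition quorum_size :: "nat \<Rightarrow> nat \<Rightarrow> nat" where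
  "quorum_size N k = nat \<lceil>(2 * real N + real k) / 3\<rceil>"

definition evict :: "nat \<Rightarrow> (tag \<times> 'e) set \<Rightarrow> (tag \<times> 'e) set" where
  "evict \<delta> L = (if card L > \<delta> + 1 then {x \<in> L. fst x \<noteq> Min (fst ` L)} else L)"

definition good_tags :: "nat \<Rightarrow> (tag \<times> 'e) set \<Rightarrow> (nat \<times> (tag \<times> 'e) set) set \<Rightarrow> tag set" where
  "good_tags k S R = {t. k \<le> card {j. \<exists>L. (j, L) \<in> R \<and> (\<exists>e. (t, e) \<in> L \<inter> S)}}"

definition put_msgs :: "nat \<Rightarrow> nat \<Rightarrow> opid \<Rightarrow> ('v \<Rightarrow> nat \<Rightarrow> 'e) \<Rightarrow> tag \<Rightarrow> 'v \<Rightarrow> 'e packet multiset" where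
  "put_msgs N c oid enc t v = mset (map (\<lambda>j. (Client c, Node j, oid, PutM (t, enc v j))) [0..<N])"

definition bcast :: "nat \<Rightarrow> nat \<Rightarrow> opid \<Rightarrow> 'e msg \<Rightarrow> 'e packet multiset" where
  "bcast N c oid m = mset (map (\<lambda>j. (Client c, Node j, oid, m)) [0..<N])"

definition resp_event :: "opkind \<Rightarrow> opid \<Rightarrow> tag \<times> 'v \<Rightarrow> 'v event" where
  "resp_event kd oid tv = (case kd of WriteK \<Rightarrow> RespW oid | ReadK \<Rightarrow> RespR oid (fst tv) (snd tv))"

text \<open>Parameters: N = |C|, k (code dimension),
  delta, B = set of Byzantine flexnodes, enc v j = j-th coded element of v,
  dec = decoding.  Client crashes need no rule: a crashed process simply
  takes no further steps.\<close>
inductive step :: "nat \<Rightarrow> nat \<Rightarrow> nat \<Rightarrow> nat set \<Rightarrow> ('v \<Rightarrow> nat \<Rightarrow> 'e) \<Rightarrow> ('e set \<Rightarrow> 'v)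
                   \<Rightarrow> ('v, 'e) gstate \<Rightarrow> ('v, 'e) gstate \<Rightarrow> bool"
  for N k \<delta> B enc dec where
  invoke_write:
  "cst s c = Idle \<Longrightarrow>
   step N k \<delta> B enc dec s
     (s\<lparr>cst := (cst s)(c := GetTagPh v {}),
        net := net s + bcast N c (c, cnt s c) QTag,
        hist := hist s @ [InvW (c, cnt s c) v]\<rparr>)"
| invoke_read:
  "cst s c = Idle \<Longrightarrow>
   step N k \<delta> B enc dec s
     (s\<lparr>cst := (cst s)(c := GetDataPh {}),
        net := net s + bcast N c (c, cnt s c) QData,
        hist := hist s @ [InvR (c, cnt s c)]\<rparr>)"
| node_tag:
  "j < N \<Longrightarrow> j \<notin> B \<Longrightarrow> (src, Node j, oid, QTag) \<in># net s \<Longrightarrow>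
   p \<in> lst s j \<Longrightarrow> fst p = Max (fst ` lst s j) \<Longrightarrow>
   step N k \<delta> B enc dec s
     (s\<lparr>net := net s - {#(src, Node j, oid, QTag)#} + {#(Node j, src, oid, RTag p)#}\<rparr>)"
| client_tag_wait:
  "(Node j, Client c, (c, cnt s c), RTag p) \<in># net s \<Longrightarrow>
   cst s c = GetTagPh v R \<Longrightarrow> j \<notin> fst ` R \<Longrightarrow>
   \<not> quorum_size N k \<le> card (fst ` insert (j, p) R) \<Longrightarrow>
   step N k \<delta> B enc dec s
     (s\<lparr>cst := (cst s)(c := GetTagPh v (insert (j, p) R)),
        net := net s - {#(Node j, Client c, (c, cnt s c), RTag p)#}\<rparr>)"
| client_tag_done:
  "(Node j, Client c, (c, cnt s c), RTag p) \<in># net s \<Longrightarrow>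
   cst s c = GetTagPh v R \<Longrightarrow> j \<notin> fst ` R \<Longrightarrow>
   quorum_size N k \<le> card (fst ` insert (j, p) R) \<Longrightarrow>
   t = Max {fst x | i x. (i, x) \<in> insert (j, p) R \<and> x \<in> signed s} \<Longrightarrow>
   t' = (fst t + 1, c) \<Longrightarrow>
   step N k \<delta> B enc dec s
     (s\<lparr>cst := (cst s)(c := PutPh WriteK (t', v) {}),
        net := net s - {#(Node j, Client c, (c, cnt s c), RTag p)#}
                 + put_msgs N c (c, cnt s c) enc t' v,
        signed := signed s \<union> {(t', enc v i) | i. i < N},
        wtag := (wtag s)((c, cnt s c) := Some t')\<rparr>)"
| node_put:
  "j < N \<Longrightarrow> j \<notin> B \<Longrightarrow> (src, Node j, oid, PutM p) \<in># net s \<Longrightarrow>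
   L' = (if p \<in> signed s \<and> (\<forall>x\<in>lst s j. fst x \<noteq> fst p)
         then evict \<delta> (insert p (lst s j)) else lst s j) \<Longrightarrow>
   step N k \<delta> B enc dec s
     (s\<lparr>lst := (lst s)(j := L'),
        net := net s - {#(src, Node j, oid, PutM p)#} + {#(Node j, src, oid, Ack)#}\<rparr>)"
| client_ack_wait:
  "(Node j, Client c, (c, cnt s c), Ack) \<in># net s \<Longrightarrow>
   cst s c = PutPh kd tv A \<Longrightarrow>
   \<not> quorum_size N k \<le> card (insert j A) \<Longrightarrow>
   step N k \<delta> B enc dec s
     (s\<lparr>cst := (cst s)(c := PutPh kd tv (insert j A)),
        net := net s - {#(Node j, Client c, (c, cnt s c), Ack)#}\<rparr>)"
| client_ack_done:
  "(Node j, Client c, (c, cnt s c), Ack) \<in># net s \<Longrightarrow>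
   cst s c = PutPh kd tv A \<Longrightarrow>
   quorum_size N k \<le> card (insert j A) \<Longrightarrow>
   step N k \<delta> B enc dec s
     (s\<lparr>cst := (cst s)(c := Idle),
        cnt := (cnt s)(c := Suc (cnt s c)),
        net := net s - {#(Node j, Client c, (c, cnt s c), Ack)#},
        hist := hist s @ [resp_event kd (c, cnt s c) tv]\<rparr>)"
| node_data:
  "j < N \<Longrightarrow> j \<notin> B \<Longrightarrow> (src, Node j, oid, QData) \<in># net s \<Longrightarrow>
   step N k \<delta> B enc dec s
     (s\<lparr>net := net s - {#(src, Node j, oid, QData)#} + {#(Node j, src, oid, RData (lst s j))#}\<rparr>)"
| client_data_wait:
  "(Node j, Client c, (c, cnt s c), RData L) \<in># net s \<Longrightarrow>
   cst s c = GetDataPh R \<Longrightarrow> j \<notin> fst ` R \<Longrightarrow> card (fst ` R) < quorum_size N k \<Longrightarrow>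
   \<not> (card (fst ` insert (j, L) R) = quorum_size N k
       \<and> good_tags k (signed s) (insert (j, L) R) \<noteq> {}) \<Longrightarrow>
   step N k \<delta> B enc dec s
     (s\<lparr>cst := (cst s)(c := GetDataPh (insert (j, L) R)),
        net := net s - {#(Node j, Client c, (c, cnt s c), RData L)#}\<rparr>)"
| client_data_done:
  "(Node j, Client c, (c, cnt s c), RData L) \<in># net s \<Longrightarrow>
   cst s c = GetDataPh R \<Longrightarrow> j \<notin> fst ` R \<Longrightarrow> card (fst ` R) < quorum_size N k \<Longrightarrow>
   card (fst ` insert (j, L) R) = quorum_size N k \<Longrightarrow>
   good_tags k (signed s) (insert (j, L) R) \<noteq> {} \<Longrightarrow>
   t = Max (good_tags k (signed s) (insert (j, L) R)) \<Longrightarrow>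
   v = dec {e. \<exists>i L'. (i, L') \<in> insert (j, L) R \<and> (t, e) \<in> L' \<inter> signed s} \<Longrightarrow>
   step N k \<delta> B enc dec s
     (s\<lparr>cst := (cst s)(c := PutPh ReadK (t, v) {}),
        net := net s - {#(Node j, Client c, (c, cnt s c), RData L)#}
                 + put_msgs N c (c, cnt s c) enc t v,
        signed := signed s \<union> {(t, enc v i) | i. i < N}\<rparr>)"
| byzantine:
  "j \<in> B \<Longrightarrow>
   step N k \<delta> B enc dec s (s\<lparr>net := net s + {#(Node j, dst, oid, m)#}\<rparr>)"

definition init_state :: "nat \<Rightarrow> ('v \<Rightarrow> nat \<Rightarrow> 'e) \<Rightarrow> 'v \<Rightarrow> ('v, 'e) gstate" where
  "init_state N enc v0 =
     \<lparr>lst = (\<lambda>j. {(t0, enc v0 j)}), net = {#}, signed = {(t0, enc v0 j) | j. j < N},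
      cst = (\<lambda>c. Idle), cnt = (\<lambda>c. 0), hist = [], wtag = (\<lambda>x. None)\<rparr>"

definition reachable :: "nat \<Rightarrow> nat \<Rightarrow> nat \<Rightarrow> nat set \<Rightarrow> ('v \<Rightarrow> nat \<Rightarrow> 'e) \<Rightarrow> ('e set \<Rightarrow> 'v)
                         \<Rightarrow> 'v \<Rightarrow> ('v, 'e) gstate \<Rightarrow> bool" where
  "reachable N k \<delta> B enc dec v0 s = (step N k \<delta> B enc dec)\<^sup>*\<^sup>* (init_state N enc v0) s"

definition is_inv :: "'v event \<Rightarrow> opid \<Rightarrow> bool" where
  "is_inv ev oid = (case ev of InvW oid' _ \<Rightarrow> oid' = oid | InvR oid' \<Rightarrow> oid' = oid | _ \<Rightarrow> False)"

definition is_resp :: "'v event \<Rightarrow> opid \<Rightarrow> bool" where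
  "is_resp ev oid = (case ev of RespW oid' \<Rightarrow> oid' = oid | RespR oid' _ _ \<Rightarrow> oid' = oid | _ \<Rightarrow> False)"

definition precedes :: "'v event list \<Rightarrow> opid \<Rightarrow> opid \<Rightarrow> bool" where
  "precedes h o1 o2 = (\<exists>i j. i < j \<and> j < length h \<and> is_resp (h ! i) o1 \<and> is_inv (h ! j) o2)"

definition write_ops :: "'v event list \<Rightarrow> opid set" where
  "write_ops h = {oid. \<exists>i v. i < length h \<and> h ! i = InvW oid v}"

definition read_ops :: "'v event list \<Rightarrow> opid set" where
  "read_ops h = {oid. \<exists>i. i < length h \<and> h ! i = InvR oid}"

definition concurrent :: "'v event list \<Rightarrow> opid \<Rightarrow> opid \<Rightarrow> bool" where
  "concurrent h o1 o2 = (\<not> precedes h o1 o2 \<and> \<not> precedes h o2 o1)"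

definition delta_bounded :: "nat \<Rightarrow> 'v event list \<Rightarrow> bool" where
  "delta_bounded \<delta> h = (\<forall>\<rho>\<in>read_ops h. card {\<omega>\<in>write_ops h. concurrent h \<omega> \<rho>} \<le> \<delta>)"

definition code_ok :: "nat \<Rightarrow> nat \<Rightarrow> ('v \<Rightarrow> nat \<Rightarrow> 'e) \<Rightarrow> ('e set \<Rightarrow> 'v) \<Rightarrow> bool" where
  "code_ok N k enc dec = (\<forall>v S. S \<subseteq> {..<N} \<and> k \<le> card S \<longrightarrow> dec (enc v ` S) = v)"

end

theory Submission
  imports Defs
begin

definition uniq :: "('a \<Rightarrow> bool) \<Rightarrow> 'a list \<Rightarrow> bool" where
  "uniq P h \<longleftrightarrow> (\<forall>i j. i < length h \<longrightarrow> j < length h \<longrightarrow> P (h!i) \<longrightarrow> P (h!j) \<longrightarrow> i = j)"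

lemma uniq_append:
  assumes "uniq P h" and "P e \<Longrightarrow> \<forall>x\<in>set h. \<not> P x"
  shows "uniq P (h@[e])"
  unfolding uniq_def
proof (intro allI impI)
  fix i j assume i: "i < length (h@[e])" and j: "j < length (h@[e])" and pi: "P ((h@[e])!i)" and pj: "P ((h@[e])!j)"
  show "i = j"
  proof (cases "i < length h")
    case True
    note iT = True
    show ?thesis
    proof (cases "j < length h")
      case True then show ?thesis using iT assms(1) pi pj by (auto simp: nth_append uniq_def)
    next
      case False then have "j = length h" using j by simp
      then have "P e" using pj by simp
      then show ?thesis using assms(2) pi iT by (auto simp: nth_append)
    qed
  next
    case False then have ie: "i = length h" using i by simp
    then have "P e" using pi by simp
    show ?thesis
    proof (cases "j < length h")
      case True then show ?thesis using assms(2) \<open>P e\<close> pj by (auto simp: nth_append)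
    next
      case False then show ?thesis using j ie by simp
    qed
  qed
qed

lemma is_inv_simps[simp]:
  "is_inv (InvW a v) b \<longleftrightarrow> a = b" "is_inv (InvR a) b \<longleftrightarrow> a = b"
  "\<not> is_inv (RespW a) b" "\<not> is_inv (RespR a t v) b"
  "is_resp (RespW a) b \<longleftrightarrow> a = b" "is_resp (RespR a t v) b \<longleftrightarrow> a = b"
  "\<not> is_resp (InvW a v) b" "\<not> is_resp (InvR a) b"
  by (auto simp: is_inv_def is_resp_def)

lemma is_resp_event[simp]: "is_resp (resp_event kd a tv) b \<longleftrightarrow> a = b"
  "\<not> is_inv (resp_event kd a tv) b"
  by (cases kd; simp add: resp_event_def)+

lemma respinv_append:
  assumes "\<forall>i op. i < length h \<longrightarrow> is_resp (h ! i) op \<longrightarrow> (\<exists>j<i. is_inv (h ! j) op)"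
    and "\<And>op. is_resp e op \<Longrightarrow> \<exists>j<length h. is_inv (h ! j) op"
  shows "\<forall>i op. i < length (h@[e]) \<longrightarrow> is_resp ((h@[e]) ! i) op \<longrightarrow> (\<exists>j<i. is_inv ((h@[e]) ! j) op)"
proof (intro allI impI)
  fix i op assume i: "i < length (h@[e])" and r: "is_resp ((h@[e]) ! i) op"
  show "\<exists>j<i. is_inv ((h@[e]) ! j) op"
  proof (cases "i < length h")
    case True
    have "is_resp (h!i) op" using r True by (simp add: nth_append)
    then have "\<exists>j<i. is_inv (h ! j) op" using assms(1) True by blast
    then obtain j where "j < i" "is_inv (h ! j) op" by blast
    then show ?thesis using True by (auto simp: nth_append intro!: exI[of _ j])
  next
    case False then have "i = length h" using i by simp
    then have "is_resp e op" using r by simp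
    then obtain j where "j < length h" "is_inv (h ! j) op" using assms(2) by blast
    then show ?thesis using \<open>i = length h\<close> by (auto simp: nth_append intro!: exI[of _ j])
  qed
qed

definition "hA s \<longleftrightarrow> (\<forall>x\<in>set (hist s). \<forall>c m. is_inv x (c,m) \<longrightarrow> m < cnt s c \<or> (m = cnt s c \<and> cst s c \<noteq> Idle))"
definition "hB s \<longleftrightarrow> (\<forall>op. uniq (\<lambda>x. is_inv x op) (hist s))"
definition "hC s \<longleftrightarrow> (\<forall>x\<in>set (hist s). \<forall>c m. is_resp x (c,m) \<longrightarrow> m < cnt s c)"
definition "hD s \<longleftrightarrow> (\<forall>op. uniq (\<lambda>x. is_resp x op) (hist s))"
definition "hE s \<longleftrightarrow> (\<forall>i op. i < length (hist s) \<longrightarrow> is_resp (hist s ! i) op \<longrightarrow> (\<exists>j<i. is_inv (hist s ! j) op))"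
definition "hF s \<longleftrightarrow> (\<forall>c. cst s c \<noteq> Idle \<longrightarrow> (\<exists>x\<in>set (hist s). is_inv x (c, cnt s c)))"
definition "hG s \<longleftrightarrow> (\<forall>c R. cst s c = GetDataPh R \<longrightarrow> InvR (c, cnt s c) \<in> set (hist s))"
definition "hH s \<longleftrightarrow> (\<forall>c v R. cst s c = GetTagPh v R \<longrightarrow> InvW (c, cnt s c) v \<in> set (hist s))"

lemma hE_app: assumes "hist s' = hist s @ [e]" "hE s" "\<And>op. is_resp e op \<Longrightarrow> \<exists>j<length (hist s). is_inv (hist s ! j) op"
  shows "hE s'"
  unfolding hE_def assms(1) using respinv_append[of "hist s" e] assms(2,3) unfolding hE_def by blast

definition "hinv s \<longleftrightarrow> hA s \<and> hB s \<and> hC s \<and> hD s \<and> hE s \<and> hF s \<and> hG s \<and> hH s"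

context fixes N k \<delta> :: nat and B :: "nat set" and enc :: "'v \<Rightarrow> nat \<Rightarrow> 'e" and dec :: "'e set \<Rightarrow> 'v"
begin

lemma hinv_init: "hinv (init_state N enc v0)"
  by (simp add: hinv_def hA_def hB_def hC_def hD_def hE_def hF_def hG_def hH_def init_state_def uniq_def)

lemma hinv_step:
  assumes "step N k \<delta> B enc dec s s'" "hinv s"
  shows "hinv s'"
  using assms
proof (induction rule: step.induct)
  case (invoke_write s c v)
  let ?e = "InvW (c, cnt s c) v"
  have hA: "hA s" and hB: "hB s" and hC: "hC s" and hD: "hD s" and hE: "hE s" and hF: "hF s" and hG: "hG s" and hH: "hH s"
    using invoke_write by (auto simp: hinv_def)
  have new: "\<forall>x\<in>set (hist s). \<not> is_inv x (c, cnt s c)" using hA invoke_write(1) unfolding hA_def by blast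
  have "hB (s\<lparr>cst := (cst s)(c := GetTagPh v {}), net := net s + bcast N c (c, cnt s c) QTag, hist := hist s @ [?e]\<rparr>)"
    unfolding hB_def using hB new by (auto simp: hB_def intro!: uniq_append)
  moreover have "hD (s\<lparr>cst := (cst s)(c := GetTagPh v {}), net := net s + bcast N c (c, cnt s c) QTag, hist := hist s @ [?e]\<rparr>)"
    unfolding hD_def using hD by (auto simp: hD_def intro!: uniq_append)
  moreover have "hE (s\<lparr>cst := (cst s)(c := GetTagPh v {}), net := net s + bcast N c (c, cnt s c) QTag, hist := hist s @ [?e]\<rparr>)"
    by (rule hE_app[OF _ hE]) auto
  ultimately show ?case using hA hC hF hG hH invoke_write(1)
    unfolding hinv_def hA_def hC_def hF_def hG_def hH_def by auto
next
  case (invoke_read s c)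
  let ?e = "InvR (c, cnt s c)"
  have hA: "hA s" and hB: "hB s" and hC: "hC s" and hD: "hD s" and hE: "hE s" and hF: "hF s" and hG: "hG s" and hH: "hH s"
    using invoke_read by (auto simp: hinv_def)
  have new: "\<forall>x\<in>set (hist s). \<not> is_inv x (c, cnt s c)" using hA invoke_read(1) unfolding hA_def by blast
  have "hB (s\<lparr>cst := (cst s)(c := GetDataPh {}), net := net s + bcast N c (c, cnt s c) QData, hist := hist s @ [?e]\<rparr>)"
    unfolding hB_def using hB new by (auto simp: hB_def intro!: uniq_append)
  moreover have "hD (s\<lparr>cst := (cst s)(c := GetDataPh {}), net := net s + bcast N c (c, cnt s c) QData, hist := hist s @ [?e]\<rparr>)"
    unfolding hD_def using hD by (auto simp: hD_def intro!: uniq_append)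
  moreover have "hE (s\<lparr>cst := (cst s)(c := GetDataPh {}), net := net s + bcast N c (c, cnt s c) QData, hist := hist s @ [?e]\<rparr>)"
    by (rule hE_app[OF _ hE]) auto
  ultimately show ?case using hA hC hF hG hH invoke_read(1)
    unfolding hinv_def hA_def hC_def hF_def hG_def hH_def by auto
next
  case (client_ack_done j c s kd tv A)
  let ?e = "resp_event kd (c, cnt s c) tv"
  let ?s' = "s\<lparr>cst := (cst s)(c := Idle), cnt := (cnt s)(c := Suc (cnt s c)),
        net := net s - {#(Node j, Client c, (c, cnt s c), Ack)#}, hist := hist s @ [?e]\<rparr>"
  have hA: "hA s" and hB: "hB s" and hC: "hC s" and hD: "hD s" and hE: "hE s" and hF: "hF s" and hG: "hG s" and hH: "hH s"
    using client_ack_done by (auto simp: hinv_def)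
  have new: "\<forall>x\<in>set (hist s). \<not> is_resp x (c, cnt s c)" using hC unfolding hC_def by blast
  have ex: "\<exists>x\<in>set (hist s). is_inv x (c, cnt s c)" using hF client_ack_done(2) unfolding hF_def by auto
  have "hB ?s'"
    unfolding hB_def using hB by (auto simp: hB_def intro!: uniq_append)
  moreover have "hD ?s'"
    unfolding hD_def using hD new by (auto simp: hD_def intro!: uniq_append)
  moreover have "hE ?s'"
  proof -
    obtain j0 where j0: "j0 < length (hist s)" "is_inv (hist s ! j0) (c, cnt s c)" using ex by (auto simp: in_set_conv_nth)
    show ?thesis apply (rule hE_app[OF _ hE]) using j0 by auto
  qed
  moreover have "hA ?s'" unfolding hA_def
  proof (intro ballI allI impI)
    fix x c' m assume x: "x \<in> set (hist ?s')" and i: "is_inv x (c', m)"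
    then have "x \<in> set (hist s)" by auto
    then have "m < cnt s c' \<or> (m = cnt s c' \<and> cst s c' \<noteq> Idle)" using hA i unfolding hA_def by blast
    then show "m < cnt ?s' c' \<or> (m = cnt ?s' c' \<and> cst ?s' c' \<noteq> Idle)" by auto
  qed
  moreover have "hC ?s'" unfolding hC_def
  proof (intro ballI allI impI)
    fix x c' m assume x: "x \<in> set (hist ?s')" and i: "is_resp x (c', m)"
    show "m < cnt ?s' c'"
    proof (cases "x \<in> set (hist s)")
      case True
      then have "m < cnt s c'" using hC i unfolding hC_def by blast
      then show ?thesis by auto
    next
      case False then have "x = ?e" using x by auto
      then show ?thesis using i by auto
    qed
  qed
  ultimately show ?case using hF hG hH
    unfolding hinv_def hF_def hG_def hH_def by auto
qed (auto simp: hinv_def hA_def hB_def hC_def hD_def hE_def hF_def hG_def hH_def)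

end

lemma in_bcast[simp]: "x \<in># bcast N c op m \<longleftrightarrow> (\<exists>j<N. x = (Client c, Node j, op, m))"
  by (auto simp: bcast_def)
lemma in_put_msgs[simp]: "x \<in># put_msgs N c op enc t v \<longleftrightarrow> (\<exists>j<N. x = (Client c, Node j, op, PutM (t, enc v j)))"
  by (auto simp: put_msgs_def)

lemma good_tags_sub: assumes "1 \<le> k" shows "good_tags k S R \<subseteq> fst ` S"
proof
  fix t assume "t \<in> good_tags k S R"
  then have "k \<le> card {j. \<exists>L. (j, L) \<in> R \<and> (\<exists>e. (t, e) \<in> L \<inter> S)}" by (simp add: good_tags_def)
  then have "card {j. \<exists>L. (j, L) \<in> R \<and> (\<exists>e. (t, e) \<in> L \<inter> S)} \<noteq> 0" using assms by linarith
  then have "{j. \<exists>L. (j, L) \<in> R \<and> (\<exists>e. (t, e) \<in> L \<inter> S)} \<noteq> {}" by (metis card.empty)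
  then show "t \<in> fst ` S" by force
qed

lemma good_tags_Max: assumes "1 \<le> k" "finite S" "good_tags k S R \<noteq> {}"
  shows "Max (good_tags k S R) \<in> good_tags k S R" "\<exists>e. (Max (good_tags k S R), e) \<in> S"
    "finite (good_tags k S R)"
proof -
  show f: "finite (good_tags k S R)" using good_tags_sub[OF assms(1)] assms(2) finite_surj by (meson assms(2) finite_imageI finite_subset)
  show "Max (good_tags k S R) \<in> good_tags k S R" using f assms(3) by simp
  then show "\<exists>e. (Max (good_tags k S R), e) \<in> S" using good_tags_sub[OF assms(1)] by force
qed



lemma mset_upd_D: "x \<in># M + P - {#y#} \<Longrightarrow> x \<in># M \<or> x \<in># P" "x \<in># M - {#y#} + P \<Longrightarrow> x \<in># M \<or> x \<in># P"
  by (auto dest: in_diffD)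

definition "gA s \<longleftrightarrow> (\<forall>j. finite (lst s j)) \<and> finite (signed s)"
definition "gC s \<longleftrightarrow> (\<forall>j. inj_on fst (lst s j))"
definition "gD N s \<longleftrightarrow> (\<forall>j<N. lst s j \<subseteq> signed s)"
definition "gE s \<longleftrightarrow> (\<forall>x\<in>signed s. fst x = t0 \<or> (\<exists>op. wtag s op = Some (fst x)))"
definition "gF s \<longleftrightarrow> (\<forall>op t. wtag s op = Some t \<longrightarrow> (\<exists>v. InvW op v \<in> set (hist s)))"
definition "gG s \<longleftrightarrow> (\<forall>c v R. cst s c = GetTagPh v R \<longrightarrow> wtag s (c, cnt s c) = None)"
definition "gH s \<longleftrightarrow> (\<forall>c d op p. (Client c, d, op, PutM p) \<in># net s \<longrightarrow> p \<in> signed s \<and> (wtag s op = Some (fst p) \<or> InvR op \<in> set (hist s)))"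
definition "gI s \<longleftrightarrow> (\<forall>c d op m. (Client c, d, op, m) \<in># net s \<longrightarrow> (\<exists>x\<in>set (hist s). is_inv x op))"
definition "gJ B s \<longleftrightarrow> (\<forall>j c op m. (Node j, Client c, op, m) \<in># net s \<longrightarrow> j \<notin> B \<longrightarrow> (\<exists>x\<in>set (hist s). is_inv x op))"
definition "gK N s \<longleftrightarrow> (\<forall>j d op m. (Node j, d, op, m) \<in># net s \<longrightarrow> j < N)"
definition "gL N s \<longleftrightarrow> (\<forall>c kd tv A. cst s c = PutPh kd tv A \<longrightarrow> A \<subseteq> {..<N}) \<and> (\<forall>c R. cst s c = GetDataPh R \<longrightarrow> fst ` R \<subseteq> {..<N})"

definition "ginv N B s \<longleftrightarrow> gA s \<and> gC s \<and> gD N s \<and> gE s \<and> gF s \<and> gG s \<and> gH s \<and> gI s \<and> gJ B s \<and> gK N s \<and> gL N s"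

context fixes N k \<delta> :: nat and B :: "nat set" and enc :: "'v \<Rightarrow> nat \<Rightarrow> 'e" and dec :: "'e set \<Rightarrow> 'v"
begin

lemma ginv_init: "ginv N B (init_state N enc v0)"
  by (auto simp: ginv_def gA_def gC_def gD_def gE_def gF_def gG_def gH_def gI_def gJ_def gK_def gL_def init_state_def t0_def)

lemma evict_sub: "evict \<delta>' L \<subseteq> L" by (auto simp: evict_def)

lemma gA_step: "step N k \<delta> B enc dec s s' \<Longrightarrow> gA s \<Longrightarrow> gA s'"
  by (induction rule: step.induct) (auto simp: gA_def intro: finite_subset[OF evict_sub])

lemma gC_step: "step N k \<delta> B enc dec s s' \<Longrightarrow> gC s \<Longrightarrow> gC s'"
  by (induction rule: step.induct) (auto simp: gC_def intro!: inj_on_subset[OF _ evict_sub])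

lemma gD_step: "step N k \<delta> B enc dec s s' \<Longrightarrow> gD N s \<Longrightarrow> gD N s'"
  by (induction rule: step.induct) (auto simp: gD_def dest!: subsetD[OF evict_sub])

lemma gE_step: "step N k \<delta> B enc dec s s' \<Longrightarrow> 1 \<le> k \<Longrightarrow> gA s \<Longrightarrow> gG s \<Longrightarrow> gE s \<Longrightarrow> gE s'"
proof (induction rule: step.induct)
  case (client_tag_done j c s p v R t t')
  have none: "wtag s (c, cnt s c) = None" using client_tag_done(2,9) by (auto simp: gG_def)
  show ?case unfolding gE_def
  proof
    fix x assume x: "x \<in> signed (s\<lparr>cst := (cst s)(c := PutPh WriteK (t', v) {}),
        net := net s - {#(Node j, Client c, (c, cnt s c), RTag p)#} + put_msgs N c (c, cnt s c) enc t' v,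
        signed := signed s \<union> {(t', enc v i) | i. i < N},
        wtag := (wtag s)((c, cnt s c) := Some t')\<rparr>)"
    show "fst x = t0 \<or> (\<exists>op. wtag (s\<lparr>cst := (cst s)(c := PutPh WriteK (t', v) {}),
        net := net s - {#(Node j, Client c, (c, cnt s c), RTag p)#} + put_msgs N c (c, cnt s c) enc t' v,
        signed := signed s \<union> {(t', enc v i) | i. i < N},
        wtag := (wtag s)((c, cnt s c) := Some t')\<rparr>) op = Some (fst x))"
    proof (cases "x \<in> signed s")
      case True
      then have "fst x = t0 \<or> (\<exists>op. wtag s op = Some (fst x))" using client_tag_done(10) by (auto simp: gE_def)
      then show ?thesis using none by (simp del: split_paired_Ex split_paired_All) (metis option.distinct(1))
    next
      case False
      then have "fst x = t'" using x by auto
      then show ?thesis by auto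
    qed
  qed
next
  case (client_data_done j c s L R t v)
  have fin: "finite (signed s)" using \<open>gA s\<close> by (simp add: gA_def)
  obtain e where e: "(t, e) \<in> signed s" using good_tags_Max(2)[OF client_data_done(9) fin client_data_done(6)] client_data_done(7) by blast
  then have "t = t0 \<or> (\<exists>op. wtag s op = Some t)" using \<open>gE s\<close> unfolding gE_def by fastforce
  then show ?case using \<open>gE s\<close> by (auto simp: gE_def)
qed (auto simp: gE_def)

lemma gF_step: "step N k \<delta> B enc dec s s' \<Longrightarrow> hinv s \<Longrightarrow> gF s \<Longrightarrow> gF s'"
proof (induction rule: step.induct)
  case (client_tag_done j c s p v R t t')
  have "InvW (c, cnt s c) v \<in> set (hist s)" using client_tag_done(2,7) by (auto simp: hinv_def hH_def)
  then show ?case using client_tag_done(8) by (auto simp: gF_def simp del: split_paired_All split_paired_Ex)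
qed (auto simp: gF_def hinv_def hH_def simp del: split_paired_All split_paired_Ex)

lemma gG_step: "step N k \<delta> B enc dec s s' \<Longrightarrow> hinv s \<Longrightarrow> gF s \<Longrightarrow> gG s \<Longrightarrow> gG s'"
proof (induction rule: step.induct)
  case (invoke_write s c v)
  have "wtag s (c, cnt s c) = None"
  proof (rule ccontr)
    assume "wtag s (c, cnt s c) \<noteq> None"
    then obtain v' where "InvW (c, cnt s c) v' \<in> set (hist s)" using \<open>gF s\<close> unfolding gF_def by blast
    then show False using \<open>hinv s\<close> invoke_write(1) unfolding hinv_def hA_def by fastforce
  qed
  then show ?case using \<open>gG s\<close> by (auto simp: gG_def)
qed (auto simp: gG_def simp del: split_paired_All split_paired_Ex)

lemma gH_step: "step N k \<delta> B enc dec s s' \<Longrightarrow> hinv s \<Longrightarrow> gG s \<Longrightarrow> gH s \<Longrightarrow> gH s'"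
proof -
  assume st: "step N k \<delta> B enc dec s s'" and h: "hinv s" and g: "gG s" and gh: "gH s"
  have wt: "wtag s op = Some x \<Longrightarrow> wtag s' op = Some x" for op x
    using st g by (induction rule: step.induct) (auto simp: gG_def)
  have sg: "signed s \<subseteq> signed s'" using st by (induction rule: step.induct) auto
  have hs: "set (hist s) \<subseteq> set (hist s')" using st by (induction rule: step.induct) auto
  have old: "p \<in> signed s' \<and> (wtag s' op = Some (fst p) \<or> InvR op \<in> set (hist s'))"
    if "(Client c, d, op, PutM p) \<in># net s" for c d op p
    using gh that wt sg hs unfolding gH_def by blast
  show "gH s'" using st h g old
  proof (induction rule: step.induct)
    case (client_data_done j c s L R t v)
    then have "InvR (c, cnt s c) \<in> set (hist s)" by (auto simp: hinv_def hG_def)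
    then show ?case using client_data_done.prems(3) unfolding gH_def by (fastforce dest: in_diffD)
  qed (fastforce simp: gH_def dest: in_diffD)+
qed

lemma gI_step: "step N k \<delta> B enc dec s s' \<Longrightarrow> hinv s \<Longrightarrow> gI s \<Longrightarrow> gI s'"
proof -
  assume st: "step N k \<delta> B enc dec s s'" and h: "hinv s" and gi: "gI s"
  have hs: "set (hist s) \<subseteq> set (hist s')" using st by (induction rule: step.induct) auto
  have act: "\<exists>x\<in>set (hist s). is_inv x (c, cnt s c)" if "cst s c \<noteq> Idle" for c
    using h that unfolding hinv_def hF_def by blast
  have new: "(Client cc, dd, opp, mm) \<in># net s \<or> (\<exists>x\<in>set (hist s'). is_inv x opp)" if "(Client cc, dd, opp, mm) \<in># net s'" for cc dd opp mm
    using st that act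
  proof (induction rule: step.induct)
    case (invoke_write s c v) then show ?case by auto
  next
    case (invoke_read s c) then show ?case by auto
  next
    case (client_tag_done j c s p v R t t')
    have "\<exists>x\<in>set (hist s). is_inv x (c, cnt s c)" using client_tag_done.prems(2) client_tag_done.hyps(2) by simp
    moreover have "(Client cc, dd, opp, mm) \<in># net s \<or> opp = (c, cnt s c)" using client_tag_done.prems(1) by (auto dest!: mset_upd_D dest: in_diffD)
    ultimately show ?case by auto
  next
    case (client_data_done j c s L R t v)
    have "\<exists>x\<in>set (hist s). is_inv x (c, cnt s c)" using client_data_done.prems(2) client_data_done.hyps(2) by simp
    moreover have "(Client cc, dd, opp, mm) \<in># net s \<or> opp = (c, cnt s c)" using client_data_done.prems(1) by (auto dest!: mset_upd_D dest: in_diffD)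
    ultimately show ?case by auto
  qed (auto dest: in_diffD)
  show "gI s'" unfolding gI_def
  proof (intro allI impI)
    fix c d op m assume "(Client c, d, op, m) \<in># net s'"
    then have "(Client c, d, op, m) \<in># net s \<or> (\<exists>x\<in>set (hist s'). is_inv x op)" by (rule new)
    then show "\<exists>x\<in>set (hist s'). is_inv x op" using gi hs unfolding gI_def by blast
  qed
qed

lemma gJ_step: "step N k \<delta> B enc dec s s' \<Longrightarrow> gI s \<Longrightarrow> gJ B s \<Longrightarrow> gJ B s'"
proof -
  assume st: "step N k \<delta> B enc dec s s'" and gi: "gI s" and gj: "gJ B s"
  have hs: "set (hist s) \<subseteq> set (hist s')" using st by (induction rule: step.induct) auto
  have new: "(Node jj, Client cc, opp, mm) \<in># net s \<or> (\<exists>dd m'. (Client cc, dd, opp, m') \<in># net s)"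
    if "(Node jj, Client cc, opp, mm) \<in># net s'" "jj \<notin> B" for jj cc opp mm
    using st that
    by (induction rule: step.induct) (auto dest!: mset_upd_D dest: in_diffD)
  show "gJ B s'" unfolding gJ_def
  proof (intro allI impI)
    fix j c op m assume "(Node j, Client c, op, m) \<in># net s'" "j \<notin> B"
    then have "(Node j, Client c, op, m) \<in># net s \<or> (\<exists>dd m'. (Client c, dd, op, m') \<in># net s)" by (rule new)
    then show "\<exists>x\<in>set (hist s'). is_inv x op" using gi gj hs \<open>j \<notin> B\<close> unfolding gI_def gJ_def by blast
  qed
qed

lemma gK_step: "step N k \<delta> B enc dec s s' \<Longrightarrow> B \<subseteq> {..<N} \<Longrightarrow> gK N s \<Longrightarrow> gK N s'"
proof -
  assume st: "step N k \<delta> B enc dec s s'" and bn: "B \<subseteq> {..<N}" and gk: "gK N s"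
  have new: "(Node jj, dd, opp, mm) \<in># net s \<or> jj < N"
    if "(Node jj, dd, opp, mm) \<in># net s'" for jj dd opp mm
    using st that bn
    by (induction rule: step.induct) (auto dest!: mset_upd_D dest: in_diffD)
  show "gK N s'" unfolding gK_def
  proof (intro allI impI)
    fix j d op m assume "(Node j, d, op, m) \<in># net s'"
    then have "(Node j, d, op, m) \<in># net s \<or> j < N" by (rule new)
    then show "j < N" using gk unfolding gK_def by blast
  qed
qed

lemma gL_step: "step N k \<delta> B enc dec s s' \<Longrightarrow> gK N s \<Longrightarrow> gL N s \<Longrightarrow> gL N s'"
proof -
  assume st: "step N k \<delta> B enc dec s s'" and gk: "gK N s" and gl: "gL N s"
  have a1: "\<And>c kd tv A. cst s c = PutPh kd tv A \<Longrightarrow> A \<subseteq> {..<N}" using gl unfolding gL_def by blast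
  have a2: "\<And>c R. cst s c = GetDataPh R \<Longrightarrow> fst ` R \<subseteq> {..<N}" using gl by (simp add: gL_def)
  have a3: "\<And>j d op m. (Node j, d, op, m) \<in># net s \<Longrightarrow> j < N" using gk unfolding gK_def by blast
  show "gL N s'" using st a1 a2 a3 unfolding gL_def
    by (induction rule: step.induct) (auto simp del: split_paired_All split_paired_Ex)
qed

end



lemma quorum_arith:
  assumes "real b < (real N - real k) / 3"
  shows "k + N + b < 2 * quorum_size N k"
proof -
  let ?x = "(2 * real N + real k) / 3"
  have "real_of_int \<lceil>?x\<rceil> \<le> real (nat \<lceil>?x\<rceil>)" by simp
  moreover have "?x \<le> real_of_int \<lceil>?x\<rceil>" by (rule le_of_int_ceiling)
  ultimately have "real (quorum_size N k) \<ge> ?x"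
    unfolding quorum_size_def by linarith
  then have "real (k + N + b) < real (2 * quorum_size N k)" using assms by simp
  then show ?thesis by linarith
qed

lemma count_lemma:
  assumes X: "X \<subseteq> {..<N}" and A: "Aq \<subseteq> {..<N}" and cX: "q \<le> card X" and cA: "q \<le> card Aq"
    and cB: "card B \<le> b" and fB: "finite B" and ar: "k + N + b < 2 * q"
    and sub: "(X \<inter> Aq) - B \<subseteq> C" and fC: "finite C"
  shows "k \<le> card C"
proof -
  have fX: "finite X" and fA: "finite Aq" using X A finite_subset by blast+
  have "card (X \<union> Aq) \<le> card {..<N}" using X A by (intro card_mono) auto
  then have u: "card (X \<union> Aq) \<le> N" by simp
  have i: "card (X \<union> Aq) + card (X \<inter> Aq) = card X + card Aq" using card_Un_Int[OF fX fA] by simp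
  have "card (X \<inter> Aq) \<le> card (((X \<inter> Aq) - B) \<union> B)" using fX fB by (intro card_mono) auto
  also have "\<dots> \<le> card ((X \<inter> Aq) - B) + card B" by (rule card_Un_le)
  finally have d: "card (X \<inter> Aq) \<le> card ((X \<inter> Aq) - B) + card B" .
  have "card ((X \<inter> Aq) - B) \<le> card C" using sub fC by (intro card_mono)
  then show ?thesis using u i d cX cA cB ar by linarith
qed

context fixes N k \<delta> :: nat and B :: "nat set" and enc :: "'v \<Rightarrow> nat \<Rightarrow> 'e" and dec :: "'e set \<Rightarrow> 'v"
begin

lemma inv_step:
  assumes "step N k \<delta> B enc dec s s'" "hinv s" "ginv N B s" "B \<subseteq> {..<N}" "1 \<le> k"
  shows "hinv s' \<and> ginv N B s'"
proof -
  have g: "gA s" "gC s" "gD N s" "gE s" "gF s" "gG s" "gH s" "gI s" "gJ B s" "gK N s" "gL N s"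
    using assms(3) by (auto simp: ginv_def)
  show ?thesis unfolding ginv_def
    using hinv_step[OF assms(1,2)] gA_step[OF assms(1) g(1)] gC_step[OF assms(1) g(2)]
      gD_step[OF assms(1) g(3)] gE_step[OF assms(1) assms(5) g(1) g(6) g(4)]
      gF_step[OF assms(1) assms(2) g(5)] gG_step[OF assms(1) assms(2) g(5) g(6)]
      gH_step[OF assms(1) assms(2) g(6) g(7)] gI_step[OF assms(1) assms(2) g(8)]
      gJ_step[OF assms(1) g(8) g(9)] gK_step[OF assms(1) assms(4) g(10)] gL_step[OF assms(1) g(10) g(11)]
    by blast
qed

lemma inv_reach:
  assumes "(step N k \<delta> B enc dec)\<^sup>*\<^sup>* (init_state N enc v0) s" "B \<subseteq> {..<N}" "1 \<le> k"
  shows "hinv s \<and> ginv N B s"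
  using assms(1)
proof (induction rule: rtranclp_induct)
  case base then show ?case by (intro conjI hinv_init ginv_init)
next
  case (step y z) then show ?case using inv_step assms(2,3) by blast
qed

lemma step_mono:
  assumes "step N k \<delta> B enc dec s s'" "gG s"
  shows "signed s \<subseteq> signed s'" "\<exists>w. hist s' = hist s @ w"
    "\<And>op x. wtag s op = Some x \<Longrightarrow> wtag s' op = Some x"
  using assms by (induction rule: step.induct) (auto simp: gG_def)

lemma evict_keep:
  assumes fin: "finite M" and inj: "inj_on fst M" and Te: "(T, e) \<in> M"
    and c: "card {t \<in> fst ` M. T < t} \<le> d"
  shows "(T, e) \<in> evict d M"
proof (cases "card M > d + 1")
  case False then show ?thesis using Te by (simp add: evict_def)
next
  case True
  have "T \<noteq> Min (fst ` M)"
  proof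
    assume Tm: "T = Min (fst ` M)"
    have "fst ` M - {T} \<subseteq> {t \<in> fst ` M. T < t}"
    proof
      fix t assume t: "t \<in> fst ` M - {T}"
      then have "T \<le> t" using Tm fin by simp
      then show "t \<in> {t \<in> fst ` M. T < t}" using t by auto
    qed
    then have "card (fst ` M - {T}) \<le> card {t \<in> fst ` M. T < t}" using fin by (intro card_mono) auto
    moreover have "card (fst ` M - {T}) = card M - 1"
      using Te card_image[OF inj] by (simp add: card_Diff_singleton image_eqI[of T fst "(T,e)"])
    ultimately show False using True c by linarith
  qed
  then show ?thesis using True Te by (simp add: evict_def)
qed

definition hiT :: "tag \<Rightarrow> ('v,'e) gstate \<Rightarrow> tag set" where
  "hiT T s = {t \<in> fst ` signed s. T < t}"
definition hasT :: "tag \<Rightarrow> ('v,'e) gstate \<Rightarrow> nat \<Rightarrow> bool" where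
  "hasT T s j \<longleftrightarrow> (\<exists>e. (T, e) \<in> lst s j)"

lemma hiT_mono: assumes "signed s \<subseteq> signed s'" "finite (signed s')"
  shows "card (hiT T s) \<le> card (hiT T s')"
  unfolding hiT_def using assms by (intro card_mono) auto

lemma put_keep:
  assumes fin: "finite L" and inj: "inj_on fst L" and Ls: "L \<subseteq> S" and fS: "finite S"
    and c: "card {t \<in> fst ` S. T < t} \<le> \<delta>" and pS: "p \<in> S"
    and L': "L' = (if p \<in> S \<and> (\<forall>x\<in>L. fst x \<noteq> fst p) then evict \<delta> (insert p L) else L)"
    and Te0: "fst p = T \<or> (\<exists>e. (T, e) \<in> L)"
  shows "\<exists>e'. (T, e') \<in> L'"
proof (cases "\<forall>x\<in>L. fst x \<noteq> fst p")
  case True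
  have inj2: "inj_on fst (insert p L)" using True inj by (auto simp: inj_on_def)
  obtain e where Te: "(T, e) \<in> insert p L" using Te0 by (metis insertI1 insertI2 prod.collapse)
  have "card {t \<in> fst ` insert p L. T < t} \<le> card {t \<in> fst ` S. T < t}"
    using Ls pS fS by (intro card_mono) auto
  then have "(T, e) \<in> evict \<delta> (insert p L)" using evict_keep[OF _ inj2 Te] fin c by simp
  then show ?thesis using True L' pS by auto
next
  case False
  then have LL: "L' = L" using L' by auto
  show ?thesis
  proof (cases "fst p = T")
    case True
    then have "\<exists>x\<in>L. fst x = T" using False by auto
    then show ?thesis using LL by (metis prod.collapse)
  next
    case False
    then show ?thesis using Te0 LL by auto
  qed
qed

lemma node_put_hasT:
  assumes j: "j < N" and g: "ginv N B s" and c: "card (hiT T s) \<le> \<delta>"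
    and L': "L' = (if p \<in> signed s \<and> (\<forall>x\<in>lst s j. fst x \<noteq> fst p) then evict \<delta> (insert p (lst s j)) else lst s j)"
    and h: "(fst p = T \<and> p \<in> signed s) \<or> hasT T s j"
  shows "\<exists>e'. (T, e') \<in> L'"
proof (cases "p \<in> signed s")
  case True
  show ?thesis
    apply (rule put_keep[OF _ _ _ _ _ True L'])
    using g j c h by (auto simp: ginv_def gA_def gC_def gD_def hiT_def hasT_def)
next
  case False
  then show ?thesis using L' h by (auto simp: hasT_def)
qed

lemma hasT_step:
  assumes "step N k \<delta> B enc dec s s'" "ginv N B s" "card (hiT T s) \<le> \<delta>" "hasT T s j"
  shows "hasT T s' j"
  using assms
proof (induction rule: step.induct)
  case (node_put j' src oid p s L')
  show ?case
  proof (cases "j' = j")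
    case True
    then have "\<exists>e'. (T, e') \<in> L'" using node_put by (intro node_put_hasT[where j=j']) auto
    then show ?thesis using True by (simp add: hasT_def)
  next
    case False then show ?thesis using node_put.prems(3) by (simp add: hasT_def)
  qed
qed (auto simp: hasT_def)

lemma ack_new:
  assumes "step N k \<delta> B enc dec s s'" "(Node j, Client c, op, Ack) \<in># net s'" "j \<notin> B"
  shows "(Node j, Client c, op, Ack) \<in># net s \<or> (\<exists>p. (Client c, Node j, op, PutM p) \<in># net s \<and> j < N \<and>
     lst s' j = (if p \<in> signed s \<and> (\<forall>x\<in>lst s j. fst x \<noteq> fst p) then evict \<delta> (insert p (lst s j)) else lst s j))"
  using assms
proof (induction rule: step.induct)
  case (node_put j' src oid p s L')
  show ?case
  proof (cases "(Node j, Client c, op, Ack) = (Node j', src, oid, Ack)")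
    case True
    then have e: "j' = j" "src = Client c" "oid = op" by auto
    show ?thesis apply (rule disjI2) apply (rule exI[of _ p]) using node_put e by simp
  next
    case False
    then show ?thesis using node_put.prems(1) by (auto dest: in_diffD)
  qed
qed (auto dest!: mset_upd_D dest: in_diffD)

lemma putph_new:
  assumes "step N k \<delta> B enc dec s s'" "cst s' c = PutPh kd tv A"
  shows "(cst s c = PutPh kd tv A \<and> cnt s' c = cnt s c) \<or> A = {} \<or>
    (\<exists>j A0. A = insert j A0 \<and> cst s c = PutPh kd tv A0 \<and> (Node j, Client c, (c, cnt s c), Ack) \<in># net s \<and> cnt s' c = cnt s c)"
  using assms by (induction rule: step.induct) (auto split: if_splits)

definition Hyp1 :: "tag \<Rightarrow> nat \<Rightarrow> nat \<Rightarrow> ('v,'e) gstate \<Rightarrow> bool" where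
  "Hyp1 T cT nT s \<longleftrightarrow> card (hiT T s) \<le> \<delta> \<and> InvR (cT, nT) \<notin> set (hist s) \<and> (\<forall>t. wtag s (cT, nT) = Some t \<longrightarrow> t = T)"

definition P1 :: "tag \<Rightarrow> nat \<Rightarrow> nat \<Rightarrow> ('v,'e) gstate \<Rightarrow> bool" where
  "P1 T cT nT s \<longleftrightarrow> (\<forall>j. j < N \<longrightarrow> j \<notin> B \<longrightarrow> (Node j, Client cT, (cT, nT), Ack) \<in># net s \<longrightarrow> hasT T s j)
     \<and> (cnt s cT = nT \<longrightarrow> (\<forall>kd tv A. cst s cT = PutPh kd tv A \<longrightarrow> (\<forall>j\<in>A. j < N \<longrightarrow> j \<notin> B \<longrightarrow> hasT T s j)))"

lemma hyp_back:
  assumes st: "step N k \<delta> B enc dec s s'" and g: "ginv N B s" "ginv N B s'" and h: "Hyp1 T cT nT s'"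
  shows "Hyp1 T cT nT s"
proof -
  have gG: "gG s" using g by (simp add: ginv_def)
  note m = step_mono[OF st gG]
  have "card (hiT T s) \<le> card (hiT T s')" using m(1) g(2) by (intro hiT_mono) (auto simp: ginv_def gA_def)
  moreover have "set (hist s) \<subseteq> set (hist s')" using m(2) by auto
  ultimately show ?thesis using h m(3) unfolding Hyp1_def by fastforce
qed

lemma P1_step:
  assumes st: "step N k \<delta> B enc dec s s'" and g: "ginv N B s" and h: "Hyp1 T cT nT s" and p: "P1 T cT nT s"
  shows "P1 T cT nT s'"
proof -
  have c: "card (hiT T s) \<le> \<delta>" using h by (simp add: Hyp1_def)
  have keep: "hasT T s j \<Longrightarrow> hasT T s' j" for j using hasT_step[OF st g c] .
  have part1: "hasT T s' j" if j: "j < N" "j \<notin> B" and a: "(Node j, Client cT, (cT, nT), Ack) \<in># net s'" for j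
  proof -
    from ack_new[OF st a j(2)] show ?thesis
    proof
      assume "(Node j, Client cT, (cT, nT), Ack) \<in># net s"
      then show ?thesis using p j keep by (auto simp: P1_def)
    next
      assume "\<exists>p. (Client cT, Node j, (cT, nT), PutM p) \<in># net s \<and> j < N \<and>
     lst s' j = (if p \<in> signed s \<and> (\<forall>x\<in>lst s j. fst x \<noteq> fst p) then evict \<delta> (insert p (lst s j)) else lst s j)"
      then obtain p where pm: "(Client cT, Node j, (cT, nT), PutM p) \<in># net s" and
        L': "lst s' j = (if p \<in> signed s \<and> (\<forall>x\<in>lst s j. fst x \<noteq> fst p) then evict \<delta> (insert p (lst s j)) else lst s j)"
        by blast
      have "p \<in> signed s \<and> (wtag s (cT, nT) = Some (fst p) \<or> InvR (cT, nT) \<in> set (hist s))"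
        using g pm unfolding ginv_def gH_def by blast
      moreover have "\<forall>t. wtag s (cT, nT) = Some t \<longrightarrow> t = T" "InvR (cT, nT) \<notin> set (hist s)"
        using h unfolding Hyp1_def by blast+
      ultimately have "fst p = T \<and> p \<in> signed s" by blast
      then have "\<exists>e'. (T, e') \<in> lst s' j" using node_put_hasT[OF j(1) g c L'] by blast
      then show ?thesis by (simp add: hasT_def)
    qed
  qed
  have part2: "hasT T s' j" if cn: "cnt s' cT = nT" and cs: "cst s' cT = PutPh kd tv A" and jA: "j \<in> A"
    and j: "j < N" "j \<notin> B" for kd tv A j
  proof -
    from putph_new[OF st cs] show ?thesis
    proof (elim disjE exE conjE)
      assume "cst s cT = PutPh kd tv A" "cnt s' cT = cnt s cT"
      then show ?thesis using p cn jA j keep by (auto simp: P1_def)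
    next
      assume "A = {}" then show ?thesis using jA by simp
    next
      fix j0 A0 assume A: "A = insert j0 A0" "cst s cT = PutPh kd tv A0"
        "(Node j0, Client cT, (cT, cnt s cT), Ack) \<in># net s" "cnt s' cT = cnt s cT"
      show ?thesis
      proof (cases "j = j0")
        case True then show ?thesis using A p cn j keep by (auto simp: P1_def)
      next
        case False then show ?thesis using A p cn j jA keep by (auto simp: P1_def)
      qed
    qed
  qed
  show ?thesis unfolding P1_def using part1 part2 by blast
qed

lemma P1_reach:
  assumes r: "(step N k \<delta> B enc dec)\<^sup>*\<^sup>* (init_state N enc v0) s" and bn: "B \<subseteq> {..<N}" and k1: "1 \<le> k"
    and h: "Hyp1 T cT nT s"
  shows "P1 T cT nT s"
  using r h
proof (induction rule: rtranclp_induct)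
  case base then show ?case by (simp add: P1_def init_state_def)
next
  case (step y z)
  have gy: "ginv N B y" using inv_reach[OF step.hyps(1) bn k1] by blast
  have gz: "ginv N B z" using inv_reach[OF rtranclp.rtrancl_into_rtrancl[OF step.hyps(1,2)] bn k1] by blast
  have hy: "Hyp1 T cT nT y" using hyp_back[OF step.hyps(2) gy gz step.prems] .
  show ?case using P1_step[OF step.hyps(2) gy hy step.IH[OF hy]] .
qed

lemma rdata_new:
  assumes "step N k \<delta> B enc dec s s'" "(Node j, Client c, op, RData L) \<in># net s'" "j \<notin> B"
  shows "(Node j, Client c, op, RData L) \<in># net s \<or> ((\<exists>m. (Client c, Node j, op, m) \<in># net s) \<and> L = lst s j)"
  using assms by (induction rule: step.induct) (auto dest!: mset_upd_D dest: in_diffD)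

lemma getdata_new:
  assumes "step N k \<delta> B enc dec s s'" "cst s' c = GetDataPh R"
  shows "(cst s c = GetDataPh R \<and> cnt s' c = cnt s c) \<or> R = {} \<or>
    (\<exists>j L R0. R = insert (j, L) R0 \<and> cst s c = GetDataPh R0 \<and> (Node j, Client c, (c, cnt s c), RData L) \<in># net s \<and> cnt s' c = cnt s c)"
  using assms by (induction rule: step.induct) (auto split: if_splits)

lemma readput_new:
  assumes "step N k \<delta> B enc dec s s'" "cst s' c = PutPh ReadK tv A"
  shows "(\<exists>A0. cst s c = PutPh ReadK tv A0 \<and> cnt s' c = cnt s c) \<or>
    (\<exists>j L R. cst s c = GetDataPh R \<and> (Node j, Client c, (c, cnt s c), RData L) \<in># net s \<and> j \<notin> fst ` R
      \<and> card (fst ` insert (j, L) R) = quorum_size N k \<and> good_tags k (signed s) (insert (j, L) R) \<noteq> {}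
      \<and> fst tv = Max (good_tags k (signed s) (insert (j, L) R)) \<and> cnt s' c = cnt s c)"
  using assms
proof (induction rule: step.induct)
  case (client_data_done j c' s L R t v)
  show ?case
  proof (cases "c' = c")
    case True
    then show ?thesis apply - apply (rule disjI2) apply (rule exI[of _ j], rule exI[of _ L], rule exI[of _ R])
      using client_data_done by auto
  next
    case False then show ?thesis using client_data_done by auto
  qed
qed (auto split: if_splits)

definition Q :: "tag \<Rightarrow> nat \<Rightarrow> nat \<Rightarrow> nat set \<Rightarrow> ('v,'e) gstate \<Rightarrow> bool" where
  "Q T cr nr Aq s \<longleftrightarrow> (\<forall>j\<in>Aq. j < N \<longrightarrow> j \<notin> B \<longrightarrow> hasT T s j)
   \<and> (\<forall>j L. j < N \<longrightarrow> j \<notin> B \<longrightarrow> j \<in> Aq \<longrightarrow> (Node j, Client cr, (cr, nr), RData L) \<in># net s \<longrightarrow> (\<exists>e. (T, e) \<in> L \<and> (T, e) \<in> signed s))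
   \<and> (cnt s cr = nr \<longrightarrow> (\<forall>R. cst s cr = GetDataPh R \<longrightarrow> (\<forall>j L. (j, L) \<in> R \<longrightarrow> j < N \<longrightarrow> j \<notin> B \<longrightarrow> j \<in> Aq \<longrightarrow> (\<exists>e. (T, e) \<in> L \<and> (T, e) \<in> signed s))))
   \<and> (cnt s cr = nr \<longrightarrow> (\<forall>tv A. cst s cr = PutPh ReadK tv A \<longrightarrow> T \<le> fst tv))"

lemma Q_step:
  assumes st: "step N k \<delta> B enc dec s s'" and g: "ginv N B s" and c: "card (hiT T s) \<le> \<delta>"
    and q: "Q T cr nr Aq s" and Aq: "Aq \<subseteq> {..<N}" "quorum_size N k \<le> card Aq"
    and cB: "card B \<le> b" and bn: "B \<subseteq> {..<N}" and ar: "k + N + b < 2 * quorum_size N k" and k1: "1 \<le> k"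
  shows "Q T cr nr Aq s'"
proof -
  have gG: "gG s" using g by (simp add: ginv_def)
  note m = step_mono[OF st gG]
  have keep: "hasT T s j \<Longrightarrow> hasT T s' j" for j using hasT_step[OF st g c] .
  have q1: "\<And>j. j \<in> Aq \<Longrightarrow> j < N \<Longrightarrow> j \<notin> B \<Longrightarrow> hasT T s j"
   and q2: "\<And>j L. j < N \<Longrightarrow> j \<notin> B \<Longrightarrow> j \<in> Aq \<Longrightarrow> (Node j, Client cr, (cr, nr), RData L) \<in># net s \<Longrightarrow> (\<exists>e. (T, e) \<in> L \<and> (T, e) \<in> signed s)"
   and q3: "\<And>R j L. cnt s cr = nr \<Longrightarrow> cst s cr = GetDataPh R \<Longrightarrow> (j, L) \<in> R \<Longrightarrow> j < N \<Longrightarrow> j \<notin> B \<Longrightarrow> j \<in> Aq \<Longrightarrow> (\<exists>e. (T, e) \<in> L \<and> (T, e) \<in> signed s)"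
   and q4: "\<And>tv A. cnt s cr = nr \<Longrightarrow> cst s cr = PutPh ReadK tv A \<Longrightarrow> T \<le> fst tv"
    using q unfolding Q_def by blast+
  have gD: "\<And>j. j < N \<Longrightarrow> lst s j \<subseteq> signed s" using g by (simp add: ginv_def gD_def)
  have part1: "\<forall>j\<in>Aq. j < N \<longrightarrow> j \<notin> B \<longrightarrow> hasT T s' j" using q1 keep by blast
  have part2: "\<exists>e. (T, e) \<in> L \<and> (T, e) \<in> signed s'"
    if j: "j < N" "j \<notin> B" "j \<in> Aq" and r: "(Node j, Client cr, (cr, nr), RData L) \<in># net s'" for j L
  proof -
    from rdata_new[OF st r j(2)] have "\<exists>e. (T, e) \<in> L \<and> (T, e) \<in> signed s"
    proof
      assume "(Node j, Client cr, (cr, nr), RData L) \<in># net s" then show ?thesis using q2 j by blast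
    next
      assume "(\<exists>m. (Client cr, Node j, (cr, nr), m) \<in># net s) \<and> L = lst s j"
      then have "L = lst s j" by blast
      then show ?thesis using q1[OF j(3,1,2)] gD[OF j(1)] by (auto simp: hasT_def)
    qed
    then show ?thesis using m(1) by blast
  qed
  have part3: "\<exists>e. (T, e) \<in> L \<and> (T, e) \<in> signed s'"
    if cn: "cnt s' cr = nr" and cs: "cst s' cr = GetDataPh R" and jl: "(j, L) \<in> R" and j: "j < N" "j \<notin> B" "j \<in> Aq" for R j L
  proof -
    from getdata_new[OF st cs] have "\<exists>e. (T, e) \<in> L \<and> (T, e) \<in> signed s"
    proof (elim disjE exE conjE)
      assume "cst s cr = GetDataPh R" "cnt s' cr = cnt s cr" then show ?thesis using q3 cn jl j by auto
    next
      assume "R = {}" then show ?thesis using jl by simp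
    next
      fix j0 L0 R0 assume a: "R = insert (j0, L0) R0" "cst s cr = GetDataPh R0"
        "(Node j0, Client cr, (cr, cnt s cr), RData L0) \<in># net s" "cnt s' cr = cnt s cr"
      show ?thesis
      proof (cases "(j, L) = (j0, L0)")
        case True then show ?thesis using a q2 j cn by auto
      next
        case False then have "(j, L) \<in> R0" using a jl by auto
        then show ?thesis using a q3 j cn by auto
      qed
    qed
    then show ?thesis using m(1) by blast
  qed
  have part4: "T \<le> fst tv" if cn: "cnt s' cr = nr" and cs: "cst s' cr = PutPh ReadK tv A" for tv A
  proof -
    from readput_new[OF st cs] show ?thesis
    proof (elim disjE exE conjE)
      fix A0 assume "cst s cr = PutPh ReadK tv A0" "cnt s' cr = cnt s cr" then show ?thesis using q4 cn by auto
    next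
      fix j L R assume a: "cst s cr = GetDataPh R" "(Node j, Client cr, (cr, cnt s cr), RData L) \<in># net s"
        "j \<notin> fst ` R" "card (fst ` insert (j, L) R) = quorum_size N k"
        "good_tags k (signed s) (insert (j, L) R) \<noteq> {}"
        "fst tv = Max (good_tags k (signed s) (insert (j, L) R))" "cnt s' cr = cnt s cr"
      let ?R = "insert (j, L) R"
      let ?C = "{j. \<exists>L. (j, L) \<in> ?R \<and> (\<exists>e. (T, e) \<in> L \<inter> signed s)}"
      have cn0: "cnt s cr = nr" using a(7) cn by simp
      have X: "fst ` ?R \<subseteq> {..<N}"
      proof -
        have "fst ` R \<subseteq> {..<N}" using g a(1) unfolding ginv_def gL_def by blast
        moreover have "j < N" using g a(2) unfolding ginv_def gK_def by blast
        ultimately show ?thesis by auto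
      qed
      have sub: "(fst ` ?R \<inter> Aq) - B \<subseteq> ?C"
      proof
        fix i assume i: "i \<in> (fst ` ?R \<inter> Aq) - B"
        then obtain Li where iL: "(i, Li) \<in> ?R" by force
        have iN: "i < N" using X i by auto
        have "\<exists>e. (T, e) \<in> Li \<and> (T, e) \<in> signed s"
        proof (cases "(i, Li) = (j, L)")
          case True then show ?thesis using q2 a(2) cn0 i iN by auto
        next
          case False then have "(i, Li) \<in> R" using iL by auto
          then show ?thesis using q3[OF cn0 a(1)] i iN by auto
        qed
        then show "i \<in> ?C" using iL by blast
      qed
      have fC: "finite ?C"
      proof (rule finite_subset)
        show "?C \<subseteq> fst ` ?R" by force
        show "finite (fst ` ?R)" using X finite_subset by blast
      qed
      have "k \<le> card ?C"
        using count_lemma[OF X Aq(1) _ Aq(2) cB _ ar sub fC] a(4) bn finite_subset by auto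
      then have Tg: "T \<in> good_tags k (signed s) ?R" by (simp add: good_tags_def)
      have fs: "finite (signed s)" using g by (simp add: ginv_def gA_def)
      have "T \<le> Max (good_tags k (signed s) ?R)" using Tg good_tags_Max(3)[OF k1 fs a(5)] by simp
      then show ?thesis using a(6) by simp
    qed
  qed
  show ?thesis unfolding Q_def using part1 part2 part3 part4 by blast
qed

lemma Q_reach:
  assumes r0: "(step N k \<delta> B enc dec)\<^sup>*\<^sup>* (init_state N enc v0) s0" and r: "(step N k \<delta> B enc dec)\<^sup>*\<^sup>* s0 s"
    and q0: "Q T cr nr Aq s0" and c: "card (hiT T s) \<le> \<delta>"
    and Aq: "Aq \<subseteq> {..<N}" "quorum_size N k \<le> card Aq"
    and cB: "card B \<le> b" and bn: "B \<subseteq> {..<N}" and ar: "k + N + b < 2 * quorum_size N k" and k1: "1 \<le> k"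
  shows "Q T cr nr Aq s"
  using r c
proof (induction rule: rtranclp_induct)
  case base show ?case by (rule q0)
next
  case (step y z)
  have ry: "(step N k \<delta> B enc dec)\<^sup>*\<^sup>* (init_state N enc v0) y" using r0 step.hyps(1) by simp
  have gy: "ginv N B y" using inv_reach[OF ry bn k1] by blast
  have gz: "ginv N B z" using inv_reach[OF rtranclp.rtrancl_into_rtrancl[OF ry step.hyps(2)] bn k1] by blast
  have gG: "gG y" using gy by (simp add: ginv_def)
  have "card (hiT T y) \<le> card (hiT T z)"
    using step_mono(1)[OF step.hyps(2) gG] gz by (intro hiT_mono) (auto simp: ginv_def gA_def)
  then have cy: "card (hiT T y) \<le> \<delta>" using step.prems by simp
  show ?case using Q_step[OF step.hyps(2) gy cy step.IH[OF cy] Aq cB bn ar k1] .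
qed

lemma step_hist: "step N k \<delta> B enc dec s s' \<Longrightarrow> hist s' = hist s \<or> (\<exists>e. hist s' = hist s @ [e])"
  by (induction rule: step.induct) auto

lemma rt_hist: "(step N k \<delta> B enc dec)\<^sup>*\<^sup>* x y \<Longrightarrow> \<exists>w. hist y = hist x @ w"
proof (induction rule: rtranclp_induct)
  case base then show ?case by simp
next
  case (step y z) then show ?case using step_hist[OF step.hyps(2)] by auto
qed

lemma rt_mono:
  assumes r0: "(step N k \<delta> B enc dec)\<^sup>*\<^sup>* (init_state N enc v0) x" and r: "(step N k \<delta> B enc dec)\<^sup>*\<^sup>* x y"
    and bn: "B \<subseteq> {..<N}" and k1: "1 \<le> k"
  shows "signed x \<subseteq> signed y \<and> (\<forall>op t. wtag x op = Some t \<longrightarrow> wtag y op = Some t)"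
  using r
proof (induction rule: rtranclp_induct)
  case base then show ?case by simp
next
  case (step y z)
  have ry: "(step N k \<delta> B enc dec)\<^sup>*\<^sup>* (init_state N enc v0) y" using r0 step.hyps(1) by simp
  have gG: "gG y" using inv_reach[OF ry bn k1] by (simp add: ginv_def)
  show ?case using step_mono[OF step.hyps(2) gG] step.IH by blast
qed

lemma split_path:
  assumes "(step N k \<delta> B enc dec)\<^sup>*\<^sup>* x y" "length (hist x) \<le> i" "i < length (hist y)"
  shows "\<exists>u v. (step N k \<delta> B enc dec)\<^sup>*\<^sup>* x u \<and> step N k \<delta> B enc dec u v \<and> (step N k \<delta> B enc dec)\<^sup>*\<^sup>* v y
     \<and> hist u = take i (hist y) \<and> hist v = take (Suc i) (hist y)"
  using assms
proof (induction rule: rtranclp_induct)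
  case base then show ?case by simp
next
  case (step y z)
  obtain w where wz: "hist z = hist y @ w" using rt_hist[OF r_into_rtranclp[of "step N k \<delta> B enc dec", OF step.hyps(2)]] by blast
  show ?case
  proof (cases "i < length (hist y)")
    case True
    then obtain u v where uv: "(step N k \<delta> B enc dec)\<^sup>*\<^sup>* x u" "step N k \<delta> B enc dec u v" "(step N k \<delta> B enc dec)\<^sup>*\<^sup>* v y"
      "hist u = take i (hist y)" "hist v = take (Suc i) (hist y)" using step.IH step.prems(1) by blast
    have "take i (hist z) = take i (hist y)" "take (Suc i) (hist z) = take (Suc i) (hist y)"
      using True wz by auto
    then show ?thesis using uv step.hyps(2) by (metis rtranclp.rtrancl_into_rtrancl)
  next
    case False
    then have "hist z \<noteq> hist y" using step.prems(2) by auto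
    then obtain e where e: "hist z = hist y @ [e]" using step_hist[OF step.hyps(2)] by auto
    then have il: "i = length (hist y)" using False step.prems(2) by simp
    show ?thesis using step.hyps e il by (intro exI[of _ y] exI[of _ z]) auto
  qed
qed

lemma step_resp:
  assumes "step N k \<delta> B enc dec u v" "hist v = hist u @ [e]" "is_resp e op"
  shows "\<exists>j c kd tv A. (Node j, Client c, (c, cnt u c), Ack) \<in># net u \<and> cst u c = PutPh kd tv A
     \<and> quorum_size N k \<le> card (insert j A) \<and> e = resp_event kd (c, cnt u c) tv \<and> lst v = lst u"
  using assms
proof (induction rule: step.induct)
  case (client_ack_done j c u kd tv A)
  show ?case using client_ack_done by (intro exI[of _ j] exI[of _ c] exI[of _ kd] exI[of _ tv] exI[of _ A]) simp
qed auto

end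


definition evid :: "'v event \<Rightarrow> opid" where
  "evid e = (case e of InvW op v \<Rightarrow> op | InvR op \<Rightarrow> op | RespW op \<Rightarrow> op | RespR op t v \<Rightarrow> op)"

lemma evid_inv: "is_inv e op \<Longrightarrow> evid e = op" by (cases e) (auto simp: evid_def)
lemma evid_resp: "is_resp e op \<Longrightarrow> evid e = op" by (cases e) (auto simp: evid_def)

lemma t0_le: "t0 \<le> (T::tag)" by (cases T) (auto simp: t0_def)

lemma in_take_nth: "x \<in> set (take n h) \<Longrightarrow> \<exists>y<n. y < length h \<and> h ! y = x"
  by (auto simp: in_set_conv_nth)

theorem mainTheorem7:
  fixes N k b \<delta> :: nat and B :: "nat set"
    and enc :: "'v \<Rightarrow> nat \<Rightarrow> 'e" and dec :: "'e set \<Rightarrow> 'v" and v0 :: 'v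
    and s :: "('v, 'e) gstate" and \<omega> \<rho> :: opid and t\<omega> t\<rho> :: tag and v\<rho> :: 'v
    and i1 i2 i3 :: nat
  assumes "1 \<le> k" and "k \<le> N"
    and "code_ok N k enc dec"
    and "B \<subseteq> {..<N}" and "card B \<le> b" and "real b < (real N - real k) / 3"
    and "1 \<le> \<delta>"
    and "reachable N k \<delta> B enc dec v0 s"
    and "delta_bounded \<delta> (hist s)"
    and "i1 < i2" and "i2 < length (hist s)" and "i3 < length (hist s)"
    and "hist s ! i1 = RespW \<omega>"
    and "hist s ! i2 = InvR \<rho>"
    and "hist s ! i3 = RespR \<rho> t\<rho> v\<rho>"
    and "wtag s \<omega> = Some t\<omega>"
  shows "t\<omega> \<le> t\<rho>"
proof -
  let ?st = "step N k \<delta> B enc dec"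
  let ?h = "hist s"
  have r: "?st\<^sup>*\<^sup>* (init_state N enc v0) s" using assms(8) by (simp add: reachable_def)
  have bn: "B \<subseteq> {..<N}" and k1: "1 \<le> k" using assms by auto
  have ar: "k + N + b < 2 * quorum_size N k" using quorum_arith[OF assms(6)] .
  have Is: "hinv s" "ginv N B s" using inv_reach[OF r bn k1] by auto
  have uB: "\<And>op. uniq (\<lambda>x. is_inv x op) ?h" using Is(1) unfolding hinv_def hB_def by blast
  have uD: "\<And>op. uniq (\<lambda>x. is_resp x op) ?h" using Is(1) unfolding hinv_def hD_def by blast
  have hE: "\<And>i op. i < length ?h \<Longrightarrow> is_resp (?h ! i) op \<Longrightarrow> \<exists>j<i. is_inv (?h ! j) op"
    using Is(1) unfolding hinv_def hE_def by blast
  have uinv: "\<And>op i j. i < length ?h \<Longrightarrow> j < length ?h \<Longrightarrow> is_inv (?h!i) op \<Longrightarrow> is_inv (?h!j) op \<Longrightarrow> i = j"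
    using uB unfolding uniq_def by blast
  have uresp: "\<And>op i j. i < length ?h \<Longrightarrow> j < length ?h \<Longrightarrow> is_resp (?h!i) op \<Longrightarrow> is_resp (?h!j) op \<Longrightarrow> i = j"
    using uD unfolding uniq_def by blast
  obtain cr nr where rho: "\<rho> = (cr, nr)" by (cases \<rho>)
  have inv2: "is_inv (?h ! i2) \<rho>" using assms(14) by simp
  have resp3: "is_resp (?h ! i3) \<rho>" using assms(15) by simp
  have i23: "i2 < i3"
  proof -
    obtain j where "j < i3" "is_inv (?h ! j) \<rho>" using hE[OF assms(12) resp3] by blast
    moreover then have "j = i2" using uinv[OF _ assms(11) _ inv2] assms(12) by auto
    ultimately show ?thesis by simp
  qed
  define ST where "ST = {t. \<exists>op. wtag s op = Some t \<and> precedes ?h op \<rho>}"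
  have finST: "finite ST"
  proof (rule finite_subset)
    show "ST \<subseteq> (\<lambda>i. the (wtag s (evid (?h ! i)))) ` {..<length ?h}"
    proof
      fix t assume "t \<in> ST"
      then obtain op where op: "wtag s op = Some t" "precedes ?h op \<rho>" unfolding ST_def by blast
      then obtain i j where ij: "i < j" "j < length ?h" "is_resp (?h ! i) op" by (auto simp: precedes_def)
      have "evid (?h ! i) = op" by (rule evid_resp[OF ij(3)])
      then show "t \<in> (\<lambda>i. the (wtag s (evid (?h ! i)))) ` {..<length ?h}"
        using op(1) ij by (intro image_eqI[of _ _ i]) auto
    qed
  qed simp
  have "precedes ?h \<omega> \<rho>" unfolding precedes_def using assms(10,11,13,14)
    by (intro exI[of _ i1] exI[of _ i2]) auto
  then have tw: "t\<omega> \<in> ST" using assms(16) unfolding ST_def by blast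
  define T where "T = Max ST"
  have TST: "T \<in> ST" unfolding T_def using finST tw by (intro Max_in) auto
  have twT: "t\<omega> \<le> T" using finST tw by (simp add: T_def)
  obtain oT where oT: "wtag s oT = Some T" "precedes ?h oT \<rho>" using TST unfolding ST_def by blast
  obtain cT nT where oTp: "oT = (cT, nT)" by (cases oT)
  obtain a b0 where ab: "a < b0" "b0 < length ?h" "is_resp (?h ! a) oT" "is_inv (?h ! b0) \<rho>"
    using oT(2) by (auto simp: precedes_def)
  have "b0 = i2" using uinv[OF ab(2) assms(11) ab(4) inv2] .
  then have ai2: "a < i2" using ab by simp
  define W where "W = {op \<in> write_ops ?h. concurrent ?h op \<rho>}"
  have cW: "card W \<le> \<delta>"
  proof -
    have "\<rho> \<in> read_ops ?h" using assms(11,14) by (auto simp: read_ops_def)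
    then show ?thesis using assms(9) by (auto simp: delta_bounded_def W_def)
  qed
  have finW: "finite W"
  proof (rule finite_subset)
    show "W \<subseteq> (\<lambda>i. evid (?h ! i)) ` {..<length ?h}"
    proof
      fix op assume "op \<in> W"
      then obtain i v where "i < length ?h" "?h ! i = InvW op v" by (auto simp: W_def write_ops_def)
      then show "op \<in> (\<lambda>i. evid (?h ! i)) ` {..<length ?h}" by (intro image_eqI[of _ _ i]) (auto simp: evid_def)
    qed
  qed simp
  obtain sa sb where sab: "?st\<^sup>*\<^sup>* (init_state N enc v0) sa" "?st sa sb" "?st\<^sup>*\<^sup>* sb s"
    "hist sa = take a ?h" "hist sb = take (Suc a) ?h"
    using split_path[OF r, of a] ai2 assms(11) by (auto simp: init_state_def)
  obtain sc sd where scd: "?st\<^sup>*\<^sup>* sb sc" "?st sc sd" "?st\<^sup>*\<^sup>* sd s"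
    "hist sc = take i3 ?h" "hist sd = take (Suc i3) ?h"
    using split_path[OF sab(3), of i3] sab(5) ai2 i23 assms(12) by auto
  have rsb: "?st\<^sup>*\<^sup>* (init_state N enc v0) sb" using sab(1,2) by simp
  have rsc: "?st\<^sup>*\<^sup>* (init_state N enc v0) sc" using rsb scd(1) by simp
  have rcs: "?st\<^sup>*\<^sup>* sc s" using scd(2,3) by simp
  have rac: "?st\<^sup>*\<^sup>* sa sc" using sab(2) scd(1) by simp
  have ras: "?st\<^sup>*\<^sup>* sa s" using rac rcs by simp
  have Isc: "hinv sc" "ginv N B sc" using inv_reach[OF rsc bn k1] by auto
  have chi: "card (hiT T sc) \<le> \<delta>"
  proof -
    have "hiT T sc \<subseteq> (\<lambda>op. the (wtag s op)) ` W"
    proof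
      fix t assume "t \<in> hiT T sc"
      then obtain e where te: "(t, e) \<in> signed sc" and Tt: "T < t" by (auto simp: hiT_def)
      have "t \<noteq> t0" using Tt t0_le[of T] by auto
      then obtain op where w1: "wtag sc op = Some t" using Isc(2) te unfolding ginv_def gE_def by fastforce
      have w: "wtag s op = Some t" using rt_mono[OF rsc rcs bn k1] w1 by blast
      obtain v where "InvW op v \<in> set (hist sc)" using Isc(2) w1 unfolding ginv_def gF_def by blast
      then obtain x where x: "x < i3" "x < length ?h" "?h ! x = InvW op v" using scd(4) in_take_nth by metis
      have opW: "op \<in> write_ops ?h" using x by (auto simp: write_ops_def)
      have np1: "\<not> precedes ?h op \<rho>"
      proof
        assume "precedes ?h op \<rho>"
        then have "t \<in> ST" using w unfolding ST_def by blast
        then have "t \<le> T" using finST by (simp add: T_def)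
        then show False using Tt by simp
      qed
      have np2: "\<not> precedes ?h \<rho> op"
      proof
        assume "precedes ?h \<rho> op"
        then obtain i j where ij: "i < j" "j < length ?h" "is_resp (?h ! i) \<rho>" "is_inv (?h ! j) op"
          by (auto simp: precedes_def)
        have "i = i3" using uresp[OF _ assms(12) ij(3) resp3] ij by simp
        moreover have "j = x" using uinv[OF ij(2) x(2) ij(4)] x(3) by simp
        ultimately show False using ij(1) x(1) by simp
      qed
      have "op \<in> W" using opW np1 np2 by (simp add: W_def concurrent_def)
      then show "t \<in> (\<lambda>op. the (wtag s op)) ` W" using w by force
    qed
    then have "card (hiT T sc) \<le> card ((\<lambda>op. the (wtag s op)) ` W)" using finW by (intro card_mono) auto
    also have "\<dots> \<le> card W" by (rule card_image_le[OF finW])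
    finally show ?thesis using cW by simp
  qed
  have Isa: "hinv sa" "ginv N B sa" using inv_reach[OF sab(1) bn k1] by auto
  have hyp: "Hyp1 \<delta> T cT nT sa"
  proof -
    have "card (hiT T sa) \<le> card (hiT T sc)"
      using rt_mono[OF sab(1) rac bn k1] Isc(2) by (intro hiT_mono) (auto simp: ginv_def gA_def)
    then have c1: "card (hiT T sa) \<le> \<delta>" using chi by simp
    have c2: "InvR oT \<notin> set (hist sa)"
    proof
      assume "InvR oT \<in> set (hist sa)"
      then obtain x where x: "x < length ?h" "?h ! x = InvR oT" using sab(4) in_take_nth by metis
      obtain v where "InvW oT v \<in> set ?h" using Is(2) oT(1) unfolding ginv_def gF_def by blast
      then obtain y where y: "y < length ?h" "?h ! y = InvW oT v" by (auto simp: in_set_conv_nth)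
      have "x = y" using uinv[OF x(1) y(1)] x(2) y(2) by simp
      then show False using x y by simp
    qed
    have c3: "\<forall>t. wtag sa oT = Some t \<longrightarrow> t = T"
    proof (intro allI impI)
      fix t assume "wtag sa oT = Some t"
      then have "wtag s oT = Some t" using rt_mono[OF sab(1) ras bn k1] by blast
      then show "t = T" using oT(1) by simp
    qed
    show ?thesis using c1 c2 c3 oTp by (simp add: Hyp1_def)
  qed
  have P1a: "P1 N B T cT nT sa" using P1_reach[OF sab(1) bn k1 hyp] .
  have hsb: "hist sb = hist sa @ [?h ! a]" using sab(4,5) ab(2) ai2 assms(11)
    by (simp add: take_Suc_conv_app_nth)
  obtain j c kd tv A where ack: "(Node j, Client c, (c, cnt sa c), Ack) \<in># net sa" "cst sa c = PutPh kd tv A"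
    "quorum_size N k \<le> card (insert j A)" "?h ! a = resp_event kd (c, cnt sa c) tv" "lst sb = lst sa"
    using step_resp[OF sab(2) hsb ab(3)] by blast
  have "(c, cnt sa c) = oT" using ack(4) ab(3) by (metis is_resp_event(1))
  then have ccT: "c = cT" "cnt sa cT = nT" using oTp by auto
  define Aq where "Aq = insert j A"
  have AqN: "Aq \<subseteq> {..<N}"
  proof -
    have "A \<subseteq> {..<N}" using Isa(2) ack(2) unfolding ginv_def gL_def by blast
    moreover have "j < N" using Isa(2) ack(1) unfolding ginv_def gK_def by blast
    ultimately show ?thesis by (simp add: Aq_def)
  qed
  have cAq: "quorum_size N k \<le> card Aq" using ack(3) by (simp add: Aq_def)
  have hasA: "hasT T sb j'" if "j' \<in> Aq" "j' < N" "j' \<notin> B" for j'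
  proof -
    have "hasT T sa j'"
    proof (cases "j' = j")
      case True then show ?thesis using P1a ack(1) ccT that by (auto simp: P1_def)
    next
      case False
      have "\<forall>kd tv A. cst sa cT = PutPh kd tv A \<longrightarrow> (\<forall>j\<in>A. j < N \<longrightarrow> j \<notin> B \<longrightarrow> hasT T sa j)"
        using P1a ccT(2) unfolding P1_def by blast
      moreover have "j' \<in> A" using False that(1) by (simp add: Aq_def)
      ultimately show ?thesis using ack(2) ccT(1) that(2,3) by blast
    qed
    then show ?thesis using ack(5) by (simp add: hasT_def)
  qed
  have Isb: "hinv sb" "ginv N B sb" using inv_reach[OF rsb bn k1] by auto
  have noinv: "\<not> (\<exists>x\<in>set (hist sb). is_inv x \<rho>)"
  proof
    assume "\<exists>x\<in>set (hist sb). is_inv x \<rho>"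
    then obtain x where "x \<in> set (hist sb)" "is_inv x \<rho>" by blast
    then obtain y where y: "y < Suc a" "y < length ?h" "?h ! y = x" using sab(5) in_take_nth by metis
    have "y = i2" using uinv[OF y(2) assms(11)] y(3) \<open>is_inv x \<rho>\<close> inv2 by simp
    then show False using y(1) ai2 by simp
  qed
  have Qsb: "Q N B T cr nr Aq sb"
  proof -
    have q2: "\<not> (Node j', Client cr, (cr, nr), RData L) \<in># net sb" if "j' \<notin> B" for j' L
      using Isb(2) noinv rho that unfolding ginv_def gJ_def by blast
    have q3: "cst sb cr = Idle" if "cnt sb cr = nr"
      using Isb(1) noinv rho that unfolding hinv_def hF_def by blast
    show ?thesis unfolding Q_def using hasA q2 q3 by auto
  qed
  have Qsc: "Q N B T cr nr Aq sc" using Q_reach[OF rsb scd(1) Qsb chi AqN cAq assms(5) bn ar k1] .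
  have hsd: "hist sd = hist sc @ [?h ! i3]" using scd(4,5) assms(12)
    by (simp add: take_Suc_conv_app_nth)
  obtain j2 c2 kd2 tv2 A2 where ack2: "cst sc c2 = PutPh kd2 tv2 A2"
    "?h ! i3 = resp_event kd2 (c2, cnt sc c2) tv2"
    using step_resp[OF scd(2) hsd resp3] by blast
  have "kd2 = ReadK \<and> (c2, cnt sc c2) = \<rho> \<and> tv2 = (t\<rho>, v\<rho>)"
    using ack2(2) assms(15) by (cases kd2) (auto simp: resp_event_def)
  then have e: "kd2 = ReadK" "c2 = cr" "cnt sc cr = nr" "fst tv2 = t\<rho>" using rho by auto
  have "\<forall>tv A. cst sc cr = PutPh ReadK tv A \<longrightarrow> T \<le> fst tv"
    using Qsc e(3) unfolding Q_def by blast
  then have "T \<le> fst tv2" using ack2(1) e(1,2) by blast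
  then show ?thesis using e(4) twT by simp
qed


end
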